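(* Let $X$ be a separable Banach space, $X\ne\{0\}$, and let $E_X$, $(e^X_n)$, $Q_X$ be as in the context. Let $(v_k)$ be a semi-normalized block sequence of $(e^X_n)$ such that $\|Q_X(v_k)\|_X\le 2^{-k}$ for every $k\in\mathbb{N}$. Then $(v_k)$ is equivalent to the standard unit vector basis of $c_0$.
   Context: Given a separable Banach space $X\neq\{0\}$ and a sequence $(x_n)$ (repetitions allowed) in the unit sphere of $X$ which is norm dense in the unit sphere, $E_X$ is the completion of $c_{00}(\mathbb{N})$ under the norm $\|z\|_{E_X}=\sup_{m\in\mathbb{N}}\|\sum_{n=0}^m z(n)x_n\|_X$; $(e^X_n)$ is the standard unit vector basis of $c_{00}(\mathbb{N})$ viewed in $E_X$ (a normalized monotone Schauder basis of $E_X$); $Q_X:E_X\to X$ is the unique bounded linear operator with $Q_X(e^X_n)=x_n$. A sequence is semi-normalized if its norms are bounded above and bounded away from $0$. *)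

theory Defs
  imports "HOL-Analysis.Analysis"
begin

text \<open>Elements of E_X are represented as scalar sequences z :: nat => real.
  The completion of c00 under the norm below is (isometrically) the space of
  those z for which the series sum_n z(n) x_n converges in X.\<close>

definition EX_space :: "(nat \<Rightarrow> 'a::real_normed_vector) \<Rightarrow> (nat \<Rightarrow> real) set" where
  "EX_space xs = {z. summable (\<lambda>n. z n *\<^sub>R xs n)}"

definition EX_norm :: "(nat \<Rightarrow> 'a::real_normed_vector) \<Rightarrow> (nat \<Rightarrow> real) \<Rightarrow> real" where
  "EX_norm xs z = (SUP m. norm (\<Sum>n\<le>m. z n *\<^sub>R xs n))"

definition QX :: "(nat \<Rightarrow> 'a::real_normed_vector) \<Rightarrow> (nat \<Rightarrow> real) \<Rightarrow> 'a" where
  "QX xs z = (\<Sum>n. z n *\<^sub>R xs n)"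

definition block_sequence :: "(nat \<Rightarrow> nat \<Rightarrow> real) \<Rightarrow> bool" where
  "block_sequence v \<longleftrightarrow>
     (\<forall>k. finite {n. v k n \<noteq> 0} \<and> (\<exists>n. v k n \<noteq> 0)) \<and>
     (\<forall>k i j. v k i \<noteq> 0 \<longrightarrow> v (Suc k) j \<noteq> 0 \<longrightarrow> i < j)"

definition semi_normalized :: "('b \<Rightarrow> real) \<Rightarrow> bool" where
  "semi_normalized nv \<longleftrightarrow> (\<exists>c C. 0 < c \<and> (\<forall>k. c \<le> nv k \<and> nv k \<le> C))"

definition equiv_c0_basis :: "((nat \<Rightarrow> real) \<Rightarrow> real) \<Rightarrow> (nat \<Rightarrow> nat \<Rightarrow> real) \<Rightarrow> bool" where
  "equiv_c0_basis nrm v \<longleftrightarrow>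
     (\<exists>A B. 0 < A \<and> 0 < B \<and>
       (\<forall>N a. 0 < N \<longrightarrow>
          A * (MAX k\<in>{..<N}. \<bar>a k\<bar>) \<le> nrm (\<lambda>n. \<Sum>k<N. a k * v k n) \<and>
          nrm (\<lambda>n. \<Sum>k<N. a k * v k n) \<le> B * (MAX k\<in>{..<N}. \<bar>a k\<bar>)))"

end

theory Submission
  imports Defs
begin

definition psum :: "(nat \<Rightarrow> 'a::real_normed_vector) \<Rightarrow> (nat \<Rightarrow> real) \<Rightarrow> nat \<Rightarrow> 'a" where
  "psum xs z m = (\<Sum>n\<le>m. z n *\<^sub>R xs n)"

lemma psum_bdd:
  assumes fin: "finite {n. z n \<noteq> 0}" and nx: "\<And>n. norm (xs n) = 1"
  shows "bdd_above (range (\<lambda>m. norm (psum xs z m)))"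
proof -
  let ?F = "{n. z n \<noteq> 0}"
  have "norm (psum xs z m) \<le> (\<Sum>n\<in>?F. \<bar>z n\<bar>)" for m
  proof -
    have "norm (psum xs z m) \<le> (\<Sum>n\<le>m. norm (z n *\<^sub>R xs n))"
      unfolding psum_def by (rule norm_sum)
    also have "\<dots> = (\<Sum>n\<le>m. \<bar>z n\<bar>)" using nx by simp
    also have "\<dots> = (\<Sum>n\<in>{..m} \<inter> ?F. \<bar>z n\<bar>)"
      by (rule sum.mono_neutral_right) auto
    also have "\<dots> \<le> (\<Sum>n\<in>?F. \<bar>z n\<bar>)"
      by (rule sum_mono2) (use fin in auto)
    finally show ?thesis .
  qed
  then show ?thesis by (intro bdd_aboveI2) blast
qed

lemma EX_upper:
  assumes "finite {n. z n \<noteq> 0}" "\<And>n. norm (xs n) = 1"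
  shows "norm (psum xs z m) \<le> EX_norm xs z"
  unfolding EX_norm_def psum_def[symmetric]
  by (rule cSUP_upper) (use psum_bdd[OF assms] in auto)

lemma EX_least:
  assumes "\<And>m. norm (psum xs z m) \<le> B"
  shows "EX_norm xs z \<le> B"
  unfolding EX_norm_def psum_def[symmetric]
  by (rule cSUP_least) (use assms in auto)

lemma EX_nonneg:
  assumes "finite {n. z n \<noteq> 0}" "\<And>n. norm (xs n) = 1"
  shows "0 \<le> EX_norm xs z"
  by (rule order_trans[OF norm_ge_zero EX_upper[OF assms]])

lemma EX_lessThan:
  assumes "finite {n. z n \<noteq> 0}" "\<And>n. norm (xs n) = 1"
  shows "norm (\<Sum>n<p. z n *\<^sub>R xs n) \<le> EX_norm xs z"
proof (cases p)
  case 0 then show ?thesis using EX_nonneg[OF assms] by simp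
next
  case (Suc p') then show ?thesis using EX_upper[OF assms, where m=p']
    by (simp add: lessThan_Suc_atMost psum_def)
qed

lemma QX_psum:
  assumes "\<And>n. m < n \<Longrightarrow> z n = 0"
  shows "QX xs z = psum xs z m"
  unfolding QX_def psum_def
  by (rule suminf_finite) (use assms in auto)

lemma block_order:
  assumes "block_sequence v" "k < l" "v k i \<noteq> 0" "v l j \<noteq> 0"
  shows "i < j"
  using assms(2,4)
proof (induction l arbitrary: j)
  case 0 then show ?case by simp
next
  case (Suc l)
  show ?case
  proof (cases "k = l")
    case True then show ?thesis using assms(1,3) Suc.prems unfolding block_sequence_def by blast
  next
    case False
    then have "k < l" using Suc.prems by simp
    obtain n where n: "v l n \<noteq> 0" using assms(1) unfolding block_sequence_def by blast
    have "i < n" using Suc.IH[OF \<open>k < l\<close> n] .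
    moreover have "n < j" using assms(1) n Suc.prems unfolding block_sequence_def by blast
    ultimately show ?thesis by simp
  qed
qed

lemma block_fin: "block_sequence v \<Longrightarrow> finite {n. v k n \<noteq> 0}"
  unfolding block_sequence_def by blast

lemma block_ne: "block_sequence v \<Longrightarrow> {n. v k n \<noteq> 0} \<noteq> {}"
  unfolding block_sequence_def by blast

lemma comb_fin:
  assumes "block_sequence v"
  shows "finite {n. (\<Sum>k<N. a k * v k n) \<noteq> 0}"
proof (rule finite_subset)
  show "{n. (\<Sum>k<N. a k * v k n) \<noteq> 0} \<subseteq> (\<Union>k<N. {n. v k n \<noteq> 0})"
  proof
    fix n assume "n \<in> {n. (\<Sum>k<N. a k * v k n) \<noteq> 0}"
    then have "(\<Sum>k<N. a k * v k n) \<noteq> 0" by simp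
    then have "\<exists>k\<in>{..<N}. a k * v k n \<noteq> 0" using sum.neutral[of "{..<N}" "\<lambda>k. a k * v k n"] by blast
    then obtain k where "k < N" "a k * v k n \<noteq> 0" by blast
    then show "n \<in> (\<Union>k<N. {n. v k n \<noteq> 0})" by auto
  qed
  show "finite (\<Union>k<N. {n. v k n \<noteq> 0})" using block_fin[OF assms] by auto
qed

lemma psum_comb:
  "psum xs (\<lambda>n. \<Sum>k<N. a k * v k n) m = (\<Sum>k<N. a k *\<^sub>R psum xs (v k) m)"
proof -
  have "psum xs (\<lambda>n. \<Sum>k<N. a k * v k n) m = (\<Sum>n\<le>m. \<Sum>k<N. (a k * v k n) *\<^sub>R xs n)"
    unfolding psum_def by (simp add: scaleR_sum_left)
  also have "\<dots> = (\<Sum>k<N. \<Sum>n\<le>m. (a k * v k n) *\<^sub>R xs n)"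
    by (rule sum.swap)
  also have "\<dots> = (\<Sum>k<N. a k *\<^sub>R psum xs (v k) m)"
    unfolding psum_def by (simp add: scaleR_sum_right)
  finally show ?thesis .
qed

lemma upper_bound:
  assumes block: "block_sequence v" and nx: "\<And>n. norm (xs n) = 1"
    and hC: "\<And>k. EX_norm xs (v k) \<le> C" and C0: "0 \<le> C"
    and small: "\<And>k. norm (QX xs (v k)) \<le> (1/2) ^ k"
    and hM: "\<And>k. k < N \<Longrightarrow> \<bar>a k\<bar> \<le> M" and M0: "0 \<le> M"
  shows "norm (psum xs (\<lambda>n. \<Sum>k<N. a k * v k n) m) \<le> (2 + C) * M"
proof -
  define I where "I k = {n. v k n \<noteq> 0}" for k
  have finI: "finite (I k)" and neI: "I k \<noteq> {}" for k
    unfolding I_def using block_fin[OF block] block_ne[OF block] by auto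
  define K where "K = {k. Min (I k) \<le> m \<and> m < Max (I k)}"
  have each: "norm (psum xs (v k) m) \<le> (1/2)^k + (if k \<in> K then C else 0)" for k
  proof -
    consider "m < Min (I k)" | "Max (I k) \<le> m" | "k \<in> K" unfolding K_def by force
    then show ?thesis
    proof cases
      case 1
      have "psum xs (v k) m = 0" unfolding psum_def
      proof (rule sum.neutral, intro ballI)
        fix n assume "n \<in> {..m}"
        then have "n < Min (I k)" using 1 by simp
        then have "n \<notin> I k" using Min_le[OF finI] by force
        then show "v k n *\<^sub>R xs n = 0" unfolding I_def by simp
      qed
      then show ?thesis using C0 by (simp add: add_nonneg_nonneg)
    next
      case 2
      have "QX xs (v k) = psum xs (v k) m"
      proof (rule QX_psum)
        fix n assume "m < n"
        then have "n \<notin> I k" using Max_ge[OF finI] 2 by force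
        then show "v k n = 0" unfolding I_def by simp
      qed
      then show ?thesis using small[of k] C0 by simp
    next
      case 3
      have "norm (psum xs (v k) m) \<le> EX_norm xs (v k)"
        by (rule EX_upper[OF block_fin[OF block]]) (rule nx)
      then have c: "norm (psum xs (v k) m) \<le> C"
        using hC[of k] by linarith
      have h: "(0::real) \<le> (1/2)^k" by simp
      show ?thesis using 3 by (simp add: add_increasing[OF h c])
    qed
  qed
  have cardK: "card ({..<N} \<inter> K) \<le> 1"
  proof -
    have "a = b" if "a \<in> K" "b \<in> K" for a b
    proof (rule ccontr)
      assume "a \<noteq> b"
      then consider "a < b" | "b < a" by linarith
      then show False
      proof cases
        case 1
        have "Max (I a) < Min (I b)"
          using block_order[OF block 1] Max_in[OF finI neI] Min_in[OF finI neI]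
          unfolding I_def by blast
        then show False using that unfolding K_def by simp
      next
        case 2
        have "Max (I b) < Min (I a)"
          using block_order[OF block 2] Max_in[OF finI neI] Min_in[OF finI neI]
          unfolding I_def by blast
        then show False using that unfolding K_def by simp
      qed
    qed
    then have "\<forall>a\<in>{..<N} \<inter> K. \<forall>b\<in>{..<N} \<inter> K. a = b" by blast
    then have "card ({..<N} \<inter> K) \<le> Suc 0"
      using card_le_Suc0_iff_eq[of "{..<N} \<inter> K"] by simp
    then show ?thesis by simp
  qed
  have geo: "(\<Sum>k<N. (1/2::real)^k) \<le> 2"
  proof -
    have "(\<Sum>k<N. (1/2::real)^k) \<le> (\<Sum>k. (1/2::real)^k)"
      by (rule sum_le_suminf) (auto intro: summable_geometric)
    also have "\<dots> = 2" by (simp add: suminf_geometric)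
    finally show ?thesis .
  qed
  have ifs: "(\<Sum>k<N. (if k \<in> K then C else 0)) \<le> C"
  proof -
    have "(\<Sum>k<N. (if k \<in> K then C else 0)) = (\<Sum>k\<in>{k\<in>{..<N}. k \<in> K}. C)"
      by (rule sum.inter_filter[symmetric]) simp
    also have "\<dots> = real (card ({..<N} \<inter> K)) * C"
      by (simp add: Int_def)
    also have "\<dots> \<le> 1 * C" using cardK C0 by (intro mult_right_mono) auto
    finally show ?thesis by simp
  qed
  show ?thesis
  proof -
    have "norm (psum xs (\<lambda>n. \<Sum>k<N. a k * v k n) m) \<le> (\<Sum>k<N. norm (a k *\<^sub>R psum xs (v k) m))"
      unfolding psum_comb by (rule norm_sum)
    also have "\<dots> \<le> (\<Sum>k<N. M * ((1/2)^k + (if k \<in> K then C else 0)))"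
    proof (rule sum_mono)
      fix k assume "k \<in> {..<N}"
      then have "\<bar>a k\<bar> \<le> M" using hM by simp
      then show "norm (a k *\<^sub>R psum xs (v k) m) \<le> M * ((1/2)^k + (if k \<in> K then C else 0))"
        using each[of k] by (simp add: mult_mono)
    qed
    also have "\<dots> = M * ((\<Sum>k<N. (1/2)^k) + (\<Sum>k<N. (if k \<in> K then C else 0)))"
      by (simp add: sum_distrib_left sum.distrib distrib_left)
    also have "\<dots> \<le> M * (2 + C)"
      using geo ifs M0 by (intro mult_left_mono) auto
    finally show ?thesis by (simp add: mult.commute)
  qed
qed

lemma lower_bound:
  assumes block: "block_sequence v" and nx: "\<And>n. norm (xs n) = 1"
    and jN: "j < N"
  shows "\<bar>a j\<bar> * norm (psum xs (v j) m) \<le> 2 * EX_norm xs (\<lambda>n. \<Sum>k<N. a k * v k n)"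
proof -
  define w where "w = (\<lambda>n. \<Sum>k<N. a k * v k n)"
  define I where "I k = {n. v k n \<noteq> 0}" for k
  have finI: "finite (I k)" and neI: "I k \<noteq> {}" for k
    unfolding I_def using block_fin[OF block] block_ne[OF block] by auto
  define p where "p = Min (I j)"
  define q where "q = Max (I j)"
  have pI: "p \<in> I j" and qI: "q \<in> I j" unfolding p_def q_def using Min_in Max_in finI neI by auto
  have below: "v j n = 0" if "n < p" for n
    using Min_le[OF finI, of n j] that unfolding p_def I_def by force
  have above: "v j n = 0" if "q < n" for n
    using Max_ge[OF finI, of n j] that unfolding q_def I_def by force
  have wfin: "finite {n. w n \<noteq> 0}" unfolding w_def by (rule comb_fin[OF block])
  have Ew1: "norm (psum xs w m') \<le> EX_norm xs w" for m'
    by (rule EX_upper[OF wfin]) (rule nx)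
  have Ew2: "norm (\<Sum>n<p. w n *\<^sub>R xs n) \<le> EX_norm xs w"
    by (rule EX_lessThan[OF wfin]) (rule nx)
  show ?thesis
  proof (cases "m < p")
    case True
    have "psum xs (v j) m = 0" unfolding psum_def
      by (rule sum.neutral) (use True below in auto)
    then show ?thesis using EX_nonneg[OF wfin nx] unfolding w_def by simp
  next
    case False
    define m' where "m' = min m q"
    have wn: "w n = a j * v j n" if "p \<le> n" "n \<le> m'" for n
    proof -
      have z: "a k * v k n = 0" if "k \<in> {..<N} - {j}" for k
      proof (rule ccontr)
        assume "a k * v k n \<noteq> 0"
        then have vk: "v k n \<noteq> 0" by simp
        have "k < j \<or> j < k" using that by auto
        then show False
        proof
          assume "k < j"
          then have "n < p" using block_order[OF block _ vk] pI unfolding I_def by blast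
          then show False using \<open>p \<le> n\<close> by simp
        next
          assume "j < k"
          then have "q < n" using block_order[OF block _ _ vk] qI unfolding I_def by blast
          then show False using \<open>n \<le> m'\<close> unfolding m'_def by simp
        qed
      qed
      have "w n = a j * v j n + (\<Sum>k\<in>{..<N} - {j}. a k * v k n)"
        unfolding w_def by (rule sum.remove) (use jN in auto)
      also have "(\<Sum>k\<in>{..<N} - {j}. a k * v k n) = 0" by (rule sum.neutral) (use z in blast)
      finally show ?thesis by simp
    qed
    have e1: "a j *\<^sub>R psum xs (v j) m = (\<Sum>n\<in>{p..m'}. w n *\<^sub>R xs n)"
    proof -
      have "a j *\<^sub>R psum xs (v j) m = (\<Sum>n\<le>m. (a j * v j n) *\<^sub>R xs n)"
        unfolding psum_def by (simp add: scaleR_sum_right)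
      also have "\<dots> = (\<Sum>n\<in>{p..m'}. (a j * v j n) *\<^sub>R xs n)"
      proof (rule sum.mono_neutral_right)
        show "{p..m'} \<subseteq> {..m}" unfolding m'_def by auto
        show "\<forall>i\<in>{..m} - {p..m'}. (a j * v j i) *\<^sub>R xs i = 0"
        proof
          fix i assume "i \<in> {..m} - {p..m'}"
          then have "i < p \<or> q < i" unfolding m'_def by auto
          then show "(a j * v j i) *\<^sub>R xs i = 0" using below above by auto
        qed
      qed simp
      also have "\<dots> = (\<Sum>n\<in>{p..m'}. w n *\<^sub>R xs n)"
        by (rule sum.cong) (auto simp: wn)
      finally show ?thesis .
    qed
    have e2: "psum xs w m' = (\<Sum>n<p. w n *\<^sub>R xs n) + (\<Sum>n\<in>{p..m'}. w n *\<^sub>R xs n)"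
    proof -
      have "p \<le> q" using Min_le[OF finI qI] unfolding p_def .
      then have "p \<le> m'" using False unfolding m'_def by simp
      then have "{..m'} = {..<p} \<union> {p..m'}" by auto
      then show ?thesis unfolding psum_def
        by (simp add: sum.union_disjoint ivl_disj_int)
    qed
    have "\<bar>a j\<bar> * norm (psum xs (v j) m) = norm (a j *\<^sub>R psum xs (v j) m)" by simp
    also have "\<dots> = norm (psum xs w m' - (\<Sum>n<p. w n *\<^sub>R xs n))" using e1 e2 by simp
    also have "\<dots> \<le> norm (psum xs w m') + norm (\<Sum>n<p. w n *\<^sub>R xs n)" by (rule norm_triangle_ineq4)
    also have "\<dots> \<le> 2 * EX_norm xs w" using Ew1[of m'] Ew2 by simp
    finally show ?thesis unfolding w_def .
  qed
qed

theorem proposition17: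
  fixes xs :: "nat \<Rightarrow> 'a::banach"
    and v :: "nat \<Rightarrow> nat \<Rightarrow> real"
  assumes separable: "\<exists>D::'a set. countable D \<and> closure D = UNIV"
    and nontriv: "\<exists>y::'a. y \<noteq> 0"
    and sphere: "\<And>n. norm (xs n) = 1"
    and dense: "sphere 0 1 \<subseteq> closure (range xs)"
    and block: "block_sequence v"
    and seminorm: "semi_normalized (\<lambda>k. EX_norm xs (v k))"
    and small: "\<And>k. norm (QX xs (v k)) \<le> (1/2) ^ k"
  shows "equiv_c0_basis (EX_norm xs) v"
proof -
  obtain c C where c0: "0 < c" and cC: "\<And>k. c \<le> EX_norm xs (v k) \<and> EX_norm xs (v k) \<le> C"
    using seminorm unfolding semi_normalized_def by blast
  have C0: "0 \<le> C" using cC[of 0] c0 by linarith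
  show ?thesis unfolding equiv_c0_basis_def
  proof (intro exI conjI allI impI)
    show "0 < c / 2" using c0 by simp
    show "0 < 2 + C" using C0 by simp
    fix N :: nat and a :: "nat \<Rightarrow> real"
    assume N: "0 < N"
    define M where "M = (MAX k\<in>{..<N}. \<bar>a k\<bar>)"
    have fin: "finite {..<N}" and ne: "{..<N} \<noteq> {}" using N by auto
    have hM: "\<bar>a k\<bar> \<le> M" if "k < N" for k
      unfolding M_def by (rule Max_ge) (use that in auto)
    have M0: "0 \<le> M" using hM[OF N] by linarith
    have "M \<in> (\<lambda>k. \<bar>a k\<bar>) ` {..<N}"
      unfolding M_def by (rule Max_in) (use fin ne in auto)
    then obtain j where jN: "j < N" and aj: "\<bar>a j\<bar> = M" by auto
    define w where "w = (\<lambda>n. \<Sum>k<N. a k * v k n)"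
    have wfin: "finite {n. w n \<noteq> 0}" unfolding w_def by (rule comb_fin[OF block])
    have E0: "0 \<le> EX_norm xs w" by (rule EX_nonneg[OF wfin]) (rule sphere)
    show "EX_norm xs (\<lambda>n. \<Sum>k<N. a k * v k n) \<le> (2 + C) * (MAX k\<in>{..<N}. \<bar>a k\<bar>)"
      unfolding M_def[symmetric]
      by (rule EX_least, rule upper_bound[OF block sphere _ C0 small hM M0]) (use cC in auto)
    show "c / 2 * (MAX k\<in>{..<N}. \<bar>a k\<bar>) \<le> EX_norm xs (\<lambda>n. \<Sum>k<N. a k * v k n)"
      unfolding M_def[symmetric] w_def[symmetric]
    proof (cases "a j = 0")
      case True
      then show "c / 2 * M \<le> EX_norm xs w" using aj E0 by simp
    next
      case False
      then have apos: "0 < \<bar>a j\<bar>" by simp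
      have "EX_norm xs (v j) \<le> 2 * EX_norm xs w / \<bar>a j\<bar>"
      proof (rule EX_least)
        fix m
        have "\<bar>a j\<bar> * norm (psum xs (v j) m) \<le> 2 * EX_norm xs w"
          unfolding w_def by (rule lower_bound[OF block sphere jN])
        then show "norm (psum xs (v j) m) \<le> 2 * EX_norm xs w / \<bar>a j\<bar>"
          using apos by (simp add: field_simps)
      qed
      then have "c \<le> 2 * EX_norm xs w / \<bar>a j\<bar>" using cC[of j] by linarith
      then have "c * \<bar>a j\<bar> \<le> 2 * EX_norm xs w" using apos by (simp add: field_simps)
      then show "c / 2 * M \<le> EX_norm xs w" using aj by simp
    qed
  qed
qed

end
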